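(* Let $\epsilon \in (0,1/2]$ and let $n$ be large. Let $d$ be an integer with $d \geq 6\epsilon^{-2}\log n$ and $d = \Theta(\epsilon^{-2}\log n)$. Let $Q \in \mathbb{R}^{n\times d}$ be a random matrix whose entries are independent and uniformly distributed on $\{+1/\sqrt{d}, -1/\sqrt{d}\}$, and let $M = \sigma(QQ^\top)\in\mathbb{R}^{n\times n}$, where $\sigma$ is the entrywise exponential function. Then: (1) For any $\gamma\in[0,1]$, with probability at least $1-n^{-1}$ there exists a sparse + low-rank estimator of $M$ (a matrix $S+R$ with $S$ sparse and $R$ low-rank) with $O(\gamma^{-1} n^{3/2}\log n)$ parameters whose Frobenius error $\|M-(S+R)\|_F$ is at most $\gamma\sqrt{n}$. (2) For any matrix $R\in\mathbb{R}^{n\times n}$ whose rank satisfies $n-\mathrm{rank}(R) = \Omega(n)$, with probability at least $1-n^{-1}$ we have $\|M-R\|_F \geq \Omega(\sqrt{n})$. (3) Any matrix $E_S\in\mathbb{R}^{n\times n}$ with row sparsity $k$ (each row has fewer than $k$ nonzero entries) such that $n-k=\omega(1)$ satisfies $\|M-E_S\|_F\geq\Omega(\sqrt{n})$ with probability at least $1-n^{-1}$.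
   Context: Asymptotic notation $O,\Omega,\Theta,o,\omega$ is with respect to $n\to\infty$. The number of parameters of a sparse + low-rank matrix $S + UV^\top$ is the number of nonzeros of $S$ plus the number of entries of the low-rank factors (e.g. $n\cdot\mathrm{rank}$). $\log$ denotes the natural logarithm. *)

theory Defs
  imports "HOL-Probability.Probability" "HOL-Library.Landau_Symbols"
          "Jordan_Normal_Form.DL_Rank"
begin

text \<open>Square n x n real matrices are represented as functions nat => nat => real;
  only the entries with indices i < n, j < n are meaningful.\<close>

definition sign_pats :: "nat \<Rightarrow> nat \<Rightarrow> (nat \<times> nat \<Rightarrow> real) set" where
  "sign_pats n d = ({..<n} \<times> {..<d}) \<rightarrow>\<^sub>E {-1, 1}"

definition sign_pmf :: "nat \<Rightarrow> nat \<Rightarrow> (nat \<times> nat \<Rightarrow> real) pmf" where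
  "sign_pmf n d = pmf_of_set (sign_pats n d)"

definition Qmat :: "nat \<Rightarrow> (nat \<times> nat \<Rightarrow> real) \<Rightarrow> nat \<Rightarrow> nat \<Rightarrow> real" where
  "Qmat d s i l = s (i, l) / sqrt (real d)"

definition Mmat :: "nat \<Rightarrow> (nat \<times> nat \<Rightarrow> real) \<Rightarrow> nat \<Rightarrow> nat \<Rightarrow> real" where
  "Mmat d s i j = exp (\<Sum>l<d. Qmat d s i l * Qmat d s j l)"

definition prQ :: "nat \<Rightarrow> nat \<Rightarrow> ((nat \<times> nat \<Rightarrow> real) \<Rightarrow> bool) \<Rightarrow> real" where
  "prQ n d P = measure_pmf.prob (sign_pmf n d) {s. P s}"

definition fro :: "nat \<Rightarrow> (nat \<Rightarrow> nat \<Rightarrow> real) \<Rightarrow> real" where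
  "fro n A = sqrt (\<Sum>i<n. \<Sum>j<n. (A i j)\<^sup>2)"

definition nnz :: "nat \<Rightarrow> (nat \<Rightarrow> nat \<Rightarrow> real) \<Rightarrow> nat" where
  "nnz n A = card {(i, j). i < n \<and> j < n \<and> A i j \<noteq> 0}"

definition row_nnz :: "nat \<Rightarrow> (nat \<Rightarrow> nat \<Rightarrow> real) \<Rightarrow> nat \<Rightarrow> nat" where
  "row_nnz n A i = card {j. j < n \<and> A i j \<noteq> 0}"

definition lowrank :: "nat \<Rightarrow> (nat \<Rightarrow> nat \<Rightarrow> real) \<Rightarrow> (nat \<Rightarrow> nat \<Rightarrow> real) \<Rightarrow> nat \<Rightarrow> nat \<Rightarrow> real" where
  "lowrank r U V i j = (\<Sum>l<r. U i l * V j l)"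

definition mrank :: "nat \<Rightarrow> (nat \<Rightarrow> nat \<Rightarrow> real) \<Rightarrow> nat" where
  "mrank n A = vec_space.rank n (mat n n (\<lambda>(i, j). A i j))"

end

theory Submission
  imports Defs "HOL-Real_Asymp.Real_Asymp"
begin


lemma sp_finite: "finite (sign_pats n d)"
  unfolding sign_pats_def by (auto intro: finite_PiE)

lemma sp_ne: "sign_pats n d \<noteq> {}"
  unfolding sign_pats_def by (simp add: PiE_eq_empty_iff)

lemma prQ_card: "prQ n d P = card {s \<in> sign_pats n d. P s} / card (sign_pats n d)"
  unfolding prQ_def sign_pmf_def
  using measure_pmf_of_set[OF sp_ne sp_finite]
  by (simp add: Int_def conj_commute)

lemma prQ_one: "(\<And>s. s \<in> sign_pats n d \<Longrightarrow> P s) \<Longrightarrow> prQ n d P = 1"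
proof -
  assume "\<And>s. s \<in> sign_pats n d \<Longrightarrow> P s"
  then have "{s \<in> sign_pats n d. P s} = sign_pats n d" by auto
  then show ?thesis unfolding prQ_card using sp_ne sp_finite
    by (simp add: card_gt_0_iff)
qed

lemma sp_val: "s \<in> sign_pats n d \<Longrightarrow> i < n \<Longrightarrow> l < d \<Longrightarrow> s (i, l) = -1 \<or> s (i, l) = 1"
  unfolding sign_pats_def by auto

lemma sp_abs: "s \<in> sign_pats n d \<Longrightarrow> i < n \<Longrightarrow> l < d \<Longrightarrow> \<bar>s (i, l)\<bar> = 1"
  using sp_val[of s n d i l] by auto

lemma Mmat_eq: "Mmat d s i j = exp ((\<Sum>l<d. s (i, l) * s (j, l)) / real d)"
proof -
  have "Qmat d s i l * Qmat d s j l = s (i, l) * s (j, l) / real d" for l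
    unfolding Qmat_def by (simp add: field_simps)
  then show ?thesis unfolding Mmat_def by (simp add: sum_divide_distrib)
qed

lemma inner_abs: assumes "s \<in> sign_pats n d" "i < n" "j < n"
  shows "\<bar>\<Sum>l<d. s (i, l) * s (j, l)\<bar> \<le> real d"
proof -
  have "\<bar>\<Sum>l<d. s (i, l) * s (j, l)\<bar> \<le> (\<Sum>l<d. \<bar>s (i, l) * s (j, l)\<bar>)" by (rule sum_abs)
  also have "\<dots> = (\<Sum>l<d. 1)"
    by (rule sum.cong) (use sp_abs[OF assms(1) assms(2)] sp_abs[OF assms(1) assms(3)] in \<open>auto simp: abs_mult\<close>)
  finally show ?thesis by simp
qed

lemma Mmat_ge: assumes "s \<in> sign_pats n d" "i < n" "j < n"
  shows "exp (-1) \<le> Mmat d s i j"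
proof (cases "d = 0")
  case True then show ?thesis by (simp add: Mmat_eq)
next
  case False
  have "-1 \<le> (\<Sum>l<d. s (i, l) * s (j, l)) / real d"
    using inner_abs[OF assms] False by (simp add: field_simps abs_le_iff)
  then show ?thesis by (simp add: Mmat_eq)
qed

lemma fro_L2: "fro n A = L2_set (\<lambda>p. A (fst p) (snd p)) ({..<n} \<times> {..<n})"
  unfolding fro_def L2_set_def by (simp add: sum.cartesian_product case_prod_beta)

lemma fro_tri: "fro n (\<lambda>i j. A i j + B i j) \<le> fro n A + fro n B"
  unfolding fro_L2 by (rule L2_set_triangle_ineq)

lemma fro_diff_tri: "fro n (\<lambda>i j. A i j - C i j) \<le> fro n (\<lambda>i j. A i j - B i j) + fro n (\<lambda>i j. C i j - B i j)"
proof -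
  have "fro n (\<lambda>i j. C i j - B i j) = fro n (\<lambda>i j. B i j - C i j)"
    unfolding fro_def by (simp add: power2_commute)
  moreover have "fro n (\<lambda>i j. A i j - C i j) \<le> fro n (\<lambda>i j. A i j - B i j) + fro n (\<lambda>i j. B i j - C i j)"
    using fro_tri[of n "\<lambda>i j. A i j - B i j" "\<lambda>i j. B i j - C i j"] by simp
  ultimately show ?thesis by simp
qed

lemma part3_det:
  assumes s: "s \<in> sign_pats n d" and rows: "\<forall>i<n. row_nnz n E i < n"
  shows "sqrt (real n) / exp 1 \<le> fro n (\<lambda>i j. Mmat d s i j - E i j)"
proof -
  have row: "exp (-1) ^ 2 \<le> (\<Sum>j<n. (Mmat d s i j - E i j)\<^sup>2)" if i: "i < n" for i
  proof -
    have "\<exists>j<n. E i j = 0"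
    proof (rule ccontr)
      assume "\<not> ?thesis"
      then have "{j. j < n \<and> E i j \<noteq> 0} = {..<n}" by auto
      then show False using rows i unfolding row_nnz_def by auto
    qed
    then obtain j where j: "j < n" "E i j = 0" by auto
    have "exp (-1) ^ 2 \<le> (Mmat d s i j - E i j)\<^sup>2"
      using j Mmat_ge[OF s i j(1)] by (simp add: power_mono)
    also have "\<dots> \<le> (\<Sum>j<n. (Mmat d s i j - E i j)\<^sup>2)"
      by (rule member_le_sum) (use j in auto)
    finally show ?thesis .
  qed
  have "real n * exp (-1) ^ 2 \<le> (\<Sum>i<n. \<Sum>j<n. (Mmat d s i j - E i j)\<^sup>2)"
    using sum_mono[of "{..<n}" "\<lambda>_. exp (-1) ^ 2", OF row] by simp
  then have "sqrt (real n * exp (-1) ^ 2) \<le> fro n (\<lambda>i j. Mmat d s i j - E i j)"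
    unfolding fro_def by (rule real_sqrt_le_mono)
  moreover have "sqrt (real n * exp (-1) ^ 2) = sqrt (real n) * exp (-1)"
    by (simp add: real_sqrt_mult)
  moreover have "sqrt (real n) * exp (-1) = sqrt (real n) / exp 1"
    by (simp add: exp_minus divide_inverse)
  ultimately show ?thesis by simp
qed



definition flip :: "nat set \<Rightarrow> (nat \<times> nat \<Rightarrow> real) \<Rightarrow> (nat \<times> nat \<Rightarrow> real)" where
  "flip A s = (\<lambda>(i, l). if l = 0 \<and> i \<in> A then - s (i, l) else s (i, l))"

lemma flip_sp: assumes "s \<in> sign_pats n d" "A \<subseteq> {..<n}" "0 < d"
  shows "flip A s \<in> sign_pats n d"
  using assms unfolding sign_pats_def flip_def PiE_def extensional_def Pi_def
  by (auto split: if_splits)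

lemma flip_flip: "flip A (flip B s) = flip (sym_diff A B) s"
  unfolding flip_def by (auto simp: fun_eq_iff)

lemma flip_empty: "flip {} s = s"
  unfolding flip_def by (auto simp: fun_eq_iff)

lemma exp_diff_lb: fixes a b :: real assumes "-1 \<le> a" "a \<le> b"
  shows "exp (-1) * (b - a) \<le> exp b - exp a"
proof -
  have "exp a * (b - a) \<le> exp a * (exp (b - a) - 1)"
  proof -
    have "b - a \<le> exp (b - a) - 1" using exp_ge_add_one_self[of "b - a"] by linarith
    then show ?thesis by (intro mult_left_mono) auto
  qed
  also have "\<dots> = exp b - exp a" by (simp add: exp_diff field_simps)
  finally have "exp a * (b - a) \<le> exp b - exp a" .
  moreover have "exp (-1) * (b - a) \<le> exp a * (b - a)"
    using assms by (intro mult_right_mono) auto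
  ultimately show ?thesis by linarith
qed

lemma exp_absdiff_lb: fixes a b :: real assumes "-1 \<le> a" "-1 \<le> b"
  shows "exp (-1) * \<bar>b - a\<bar> \<le> \<bar>exp b - exp a\<bar>"
proof (cases "a \<le> b")
  case True then show ?thesis using exp_diff_lb[OF assms(1) True] by simp
next
  case False then show ?thesis using exp_diff_lb[OF assms(2), of a] by simp
qed

lemma flip_entry:
  assumes s: "s \<in> sign_pats n d" and E: "E \<subseteq> {..<n}" and d: "0 < d"
    and i: "i \<in> E" and j: "j < n" "j \<notin> E"
  shows "2 / (exp 1 * real d) \<le> \<bar>Mmat d s i j - Mmat d (flip E s) i j\<bar>"
proof -
  have iN: "i < n" using i E by auto
  let ?S = "\<Sum>l<d. s (i, l) * s (j, l)"
  let ?S' = "\<Sum>l<d. flip E s (i, l) * flip E s (j, l)"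
  have d0: "0 \<in> {..<d}" using d by simp
  have "?S' = flip E s (i, 0) * flip E s (j, 0) + (\<Sum>l\<in>{..<d} - {0}. flip E s (i, l) * flip E s (j, l))"
    by (rule sum.remove[OF _ d0]) simp
  also have "(\<Sum>l\<in>{..<d} - {0}. flip E s (i, l) * flip E s (j, l)) = (\<Sum>l\<in>{..<d} - {0}. s (i, l) * s (j, l))"
    by (rule sum.cong) (auto simp: flip_def)
  also have "flip E s (i, 0) * flip E s (j, 0) = - (s (i, 0) * s (j, 0))"
    using i j by (simp add: flip_def)
  finally have S': "?S' = - (s (i, 0) * s (j, 0)) + (\<Sum>l\<in>{..<d} - {0}. s (i, l) * s (j, l))" .
  have S: "?S = s (i, 0) * s (j, 0) + (\<Sum>l\<in>{..<d} - {0}. s (i, l) * s (j, l))"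
    by (rule sum.remove[OF _ d0]) simp
  have ab: "\<bar>s (i, 0) * s (j, 0)\<bar> = 1" using sp_abs[OF s iN d] sp_abs[OF s j(1) d] by (simp add: abs_mult)
  have diff: "\<bar>?S / real d - ?S' / real d\<bar> = 2 / real d"
    using S S' ab d by (simp add: diff_divide_distrib[symmetric] abs_divide)
  have sp': "flip E s \<in> sign_pats n d" by (rule flip_sp[OF s E d])
  have lb1: "-1 \<le> ?S / real d" using inner_abs[OF s iN j(1)] d by (simp add: field_simps abs_le_iff)
  have lb2: "-1 \<le> ?S' / real d" using inner_abs[OF sp' iN j(1)] d by (simp add: field_simps abs_le_iff)
  have "exp (-1) * \<bar>?S / real d - ?S' / real d\<bar> \<le> \<bar>exp (?S / real d) - exp (?S' / real d)\<bar>"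
    using exp_absdiff_lb[OF lb2 lb1] by simp
  then show ?thesis unfolding Mmat_eq diff by (simp add: exp_minus field_simps)
qed

lemma flip_fro:
  assumes s: "s \<in> sign_pats n d" and E: "E \<subseteq> {..<n}" and d: "0 < d"
  shows "real (card E) * real (n - card E) * (2 / (exp 1 * real d))\<^sup>2
    \<le> (fro n (\<lambda>i j. Mmat d s i j - Mmat d (flip E s) i j))\<^sup>2"
proof -
  let ?D = "\<lambda>i j. (Mmat d s i j - Mmat d (flip E s) i j)\<^sup>2"
  have fin: "finite E" using E finite_subset by blast
  have cE: "card ({..<n} - E) = n - card E" using E by (simp add: card_Diff_subset fin)
  have "real (card E) * real (n - card E) * (2 / (exp 1 * real d))\<^sup>2
      = (\<Sum>i\<in>E. \<Sum>j\<in>{..<n} - E. (2 / (exp 1 * real d))\<^sup>2)" using cE by simp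
  also have "\<dots> \<le> (\<Sum>i\<in>E. \<Sum>j\<in>{..<n} - E. ?D i j)"
  proof (intro sum_mono)
    fix i j assume "i \<in> E" "j \<in> {..<n} - E"
    then have "2 / (exp 1 * real d) \<le> \<bar>Mmat d s i j - Mmat d (flip E s) i j\<bar>"
      using flip_entry[OF s E d] by auto
    then show "(2 / (exp 1 * real d))\<^sup>2 \<le> ?D i j"
      by (metis abs_ge_zero order_trans power2_abs power_mono zero_le_divide_iff exp_ge_zero
          of_nat_0_le_iff mult_nonneg_nonneg zero_le_numeral)
  qed
  also have "\<dots> \<le> (\<Sum>i\<in>E. \<Sum>j<n. ?D i j)"
    by (intro sum_mono sum_mono2) auto
  also have "\<dots> \<le> (\<Sum>i<n. \<Sum>j<n. ?D i j)"
    by (intro sum_mono2) (use E in \<open>auto intro: sum_nonneg\<close>)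
  also have "\<dots> = (fro n (\<lambda>i j. Mmat d s i j - Mmat d (flip E s) i j))\<^sup>2"
    unfolding fro_def by (simp add: sum_nonneg)
  finally show ?thesis .
qed



lemma pair_small:
  fixes R :: "nat \<Rightarrow> nat \<Rightarrow> real"
  assumes t: "t \<in> sign_pats n d" and E: "E \<subseteq> {..<n}" and d: "0 < d"
    and b1: "fro n (\<lambda>i j. Mmat d t i j - R i j) < sqrt (real n) / exp 1"
    and b2: "fro n (\<lambda>i j. Mmat d (flip E t) i j - R i j) < sqrt (real n) / exp 1"
  shows "card E < 2 * d^2 \<or> n - card E < 2 * d^2"
proof (rule ccontr)
  assume "\<not> ?thesis"
  then have c1: "2 * d^2 \<le> card E" and c2: "2 * d^2 \<le> n - card E" by auto
  have cE: "card E \<le> n" using E card_mono[of "{..<n}" E] by simp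
  let ?F = "fro n (\<lambda>i j. Mmat d t i j - Mmat d (flip E t) i j)"
  have "?F \<le> fro n (\<lambda>i j. Mmat d t i j - R i j) + fro n (\<lambda>i j. Mmat d (flip E t) i j - R i j)"
    by (rule fro_diff_tri)
  also have "\<dots> < 2 * (sqrt (real n) / exp 1)" using b1 b2 by simp
  finally have F: "?F < 2 * (sqrt (real n) / exp 1)" .
  have F0: "0 \<le> ?F" unfolding fro_def by (simp add: sum_nonneg)
  have "?F^2 < (2 * (sqrt (real n) / exp 1))^2"
    using F F0 by (intro power_strict_mono) auto
  also have "\<dots> = 4 * real n / (exp 1)^2" by (simp add: power_divide power_mult_distrib)
  finally have F2: "?F^2 < 4 * real n / (exp 1)^2" .
  have lb: "real (card E) * real (n - card E) * (2 / (exp 1 * real d))\<^sup>2 \<le> ?F^2"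
    by (rule flip_fro[OF t E d])
  have eq: "real (card E) * real (n - card E) * (2 / (exp 1 * real d))\<^sup>2
     = 4 * (real (card E) * real (n - card E)) / ((exp 1)^2 * (real d)^2)"
    by (simp add: power_divide power_mult_distrib)
  have "4 * (real (card E) * real (n - card E)) / ((exp 1)^2 * (real d)^2) < 4 * real n / (exp 1)^2"
    using lb F2 eq by linarith
  then have lt: "real (card E) * real (n - card E) < real n * (real d)^2"
    using d by (simp add: field_simps)
  have "real n = real (card E) + real (n - card E)" using cE by simp
  have "real n * (real d)^2 \<le> real (card E) * real (n - card E)"
  proof (cases "card E \<le> n - card E")
    case True
    then have "real n \<le> 2 * real (n - card E)" using cE by linarith
    then have "real n * (real d)^2 \<le> 2 * real (n - card E) * (real d)^2"
      by (intro mult_right_mono) auto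
    also have "\<dots> = real (2 * d^2) * real (n - card E)" by simp
    also have "\<dots> \<le> real (card E) * real (n - card E)"
      by (intro mult_right_mono of_nat_mono c1) simp
    finally show ?thesis .
  next
    case False
    then have "real n \<le> 2 * real (card E)" using cE by linarith
    then have "real n * (real d)^2 \<le> 2 * real (card E) * (real d)^2"
      by (intro mult_right_mono) auto
    also have "\<dots> = real (card E) * real (2 * d^2)" by simp
    also have "\<dots> \<le> real (card E) * real (n - card E)"
      by (intro mult_left_mono of_nat_mono c2) simp
    finally show ?thesis .
  qed
  with lt show False by linarith
qed

lemma small_card:
  assumes "0 < n"
  shows "card {E. E \<subseteq> {..<n} \<and> card E < m} \<le> m * n^m"
proof -
  have eq: "{E. E \<subseteq> {..<n} \<and> card E < m} = (\<Union>k\<in>{..<m}. {E. E \<subseteq> {..<n} \<and> card E = k})"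
    by auto
  have "card {E. E \<subseteq> {..<n} \<and> card E < m} \<le> (\<Sum>k<m. card {E. E \<subseteq> {..<n} \<and> card E = k})"
    unfolding eq by (rule card_UN_le) simp
  also have "\<dots> = (\<Sum>k<m. n choose k)" by (simp add: n_subsets)
  also have "\<dots> \<le> (\<Sum>k<m. n^m)"
  proof (intro sum_mono)
    fix k assume k: "k \<in> {..<m}"
    have "n choose k \<le> n^k"
      by (cases "k \<le> n") (auto simp: binomial_le_pow binomial_eq_0)
    also have "\<dots> \<le> n^m" using assms k by (intro power_increasing) auto
    finally show "n choose k \<le> n^m" .
  qed
  finally show ?thesis by simp
qed



lemma bad_count:
  fixes R :: "nat \<Rightarrow> nat \<Rightarrow> real"
  assumes d: "0 < d" and n: "0 < n"
  shows "2^n * card {s \<in> sign_pats n d. fro n (\<lambda>i j. Mmat d s i j - R i j) < sqrt (real n) / exp 1}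
     \<le> card (sign_pats n d) * (2 * ((2 * d^2) * n^(2 * d^2)))"
proof -
  define P where "P = sign_pats n d"
  define Bad where "Bad = {s \<in> P. fro n (\<lambda>i j. Mmat d s i j - R i j) < sqrt (real n) / exp 1}"
  define m where "m = 2 * d^2"
  define Small where "Small = {E. E \<subseteq> {..<n} \<and> card E < m}"
  define N where "N = Pow {..<n}"
  have finP: "finite P" unfolding P_def by (rule sp_finite)
  have BadP: "Bad \<subseteq> P" unfolding Bad_def by auto
  have finB: "finite Bad" using finP BadP finite_subset by blast
  have finN: "finite N" unfolding N_def by simp
  have finS: "finite Small" unfolding Small_def
    by (rule finite_subset[of _ "Pow {..<n}"]) auto
  have a: "card {A \<in> N. flip A s \<in> Bad} \<le> 2 * card Small" if s: "s \<in> P" for s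
  proof (cases "{A \<in> N. flip A s \<in> Bad} = {}")
    case True then show ?thesis by (simp only: card.empty)
  next
    case False
    then obtain A0 where A0: "A0 \<in> N" "flip A0 s \<in> Bad" by auto
    define t where "t = flip A0 s"
    have tB: "t \<in> Bad" using A0 t_def by simp
    have tP: "t \<in> P" using tB BadP by auto
    have sub: "{A \<in> N. flip A s \<in> Bad} \<subseteq> (\<lambda>E. sym_diff E A0) ` Small \<union> (\<lambda>E. sym_diff ({..<n} - E) A0) ` Small"
    proof
      fix A assume A: "A \<in> {A \<in> N. flip A s \<in> Bad}"
      define E where "E = sym_diff A A0"
      have EN: "E \<subseteq> {..<n}" using A A0 unfolding E_def N_def by auto
      have AE: "A = sym_diff E A0" unfolding E_def by blast
      have "flip E t = flip A s" unfolding t_def flip_flip AE by simp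
      then have fB: "flip E t \<in> Bad" using A by simp
      have "card E < m \<or> n - card E < m"
        unfolding m_def
        by (rule pair_small[OF tP[unfolded P_def] EN d]) (use tB fB in \<open>auto simp: Bad_def\<close>)
      then show "A \<in> (\<lambda>E. sym_diff E A0) ` Small \<union> (\<lambda>E. sym_diff ({..<n} - E) A0) ` Small"
      proof
        assume "card E < m"
        then have "E \<in> Small" using EN unfolding Small_def by auto
        then show ?thesis using AE by blast
      next
        assume c: "n - card E < m"
        have finE: "finite E" using EN finite_subset by blast
        have "card ({..<n} - E) = n - card E" using EN finE by (simp add: card_Diff_subset)
        then have "{..<n} - E \<in> Small" using c unfolding Small_def by auto
        moreover have "{..<n} - ({..<n} - E) = E" using EN by auto
        ultimately show ?thesis using AE by (metis (no_types, lifting) UnI2 image_eqI)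
      qed
    qed
    have "card {A \<in> N. flip A s \<in> Bad} \<le> card ((\<lambda>E. sym_diff E A0) ` Small \<union> (\<lambda>E. sym_diff ({..<n} - E) A0) ` Small)"
      by (rule card_mono[OF _ sub]) (use finS in simp)
    also have "\<dots> \<le> card ((\<lambda>E. sym_diff E A0) ` Small) + card ((\<lambda>E. sym_diff ({..<n} - E) A0) ` Small)"
      by (rule card_Un_le)
    also have "\<dots> \<le> card Small + card Small"
      by (intro add_mono card_image_le finS)
    finally show ?thesis by simp
  qed
  have c: "card {s \<in> P. flip A s \<in> Bad} = card Bad" if A: "A \<in> N" for A
  proof -
    have AN: "A \<subseteq> {..<n}" using A N_def by auto
    have inv: "flip A (flip A s) = s" for s by (simp add: flip_flip flip_empty)
    have "bij_betw (flip A) {s \<in> P. flip A s \<in> Bad} Bad"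
    proof (rule bij_betw_byWitness[where f' = "flip A"])
      show "\<forall>a\<in>{s \<in> P. flip A s \<in> Bad}. flip A (flip A a) = a" using inv by simp
      show "\<forall>a'\<in>Bad. flip A (flip A a') = a'" using inv by simp
      show "flip A ` {s \<in> P. flip A s \<in> Bad} \<subseteq> Bad" by auto
      show "flip A ` Bad \<subseteq> {s \<in> P. flip A s \<in> Bad}"
        using BadP inv flip_sp[OF _ AN d] unfolding P_def by auto
    qed
    then show ?thesis by (rule bij_betw_same_card)
  qed
  have "(\<Sum>s\<in>P. card {A \<in> N. flip A s \<in> Bad}) = (\<Sum>s\<in>P. \<Sum>A\<in>N. if flip A s \<in> Bad then 1 else 0)"
    using finN by (simp add: sum.If_cases Int_def conj_commute)
  also have "\<dots> = (\<Sum>A\<in>N. \<Sum>s\<in>P. if flip A s \<in> Bad then 1 else 0)" by (rule sum.swap)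
  also have "\<dots> = (\<Sum>A\<in>N. card {s \<in> P. flip A s \<in> Bad})"
    using finP by (simp add: sum.If_cases Int_def conj_commute)
  also have "\<dots> = (\<Sum>A\<in>N. card Bad)" using c by simp
  also have "\<dots> = 2^n * card Bad" unfolding N_def by (simp add: card_Pow)
  finally have eq: "(\<Sum>s\<in>P. card {A \<in> N. flip A s \<in> Bad}) = 2^n * card Bad" .
  have "(\<Sum>s\<in>P. card {A \<in> N. flip A s \<in> Bad}) \<le> (\<Sum>s\<in>P. 2 * card Small)"
    using a by (intro sum_mono) auto
  also have "\<dots> = card P * (2 * card Small)" by simp
  also have "\<dots> \<le> card P * (2 * (m * n^m))"
    using small_card[OF n, of m] unfolding Small_def by simp
  finally show ?thesis using eq unfolding P_def Bad_def m_def by simp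
qed



definition wgt :: "nat \<Rightarrow> nat set \<Rightarrow> real" where
  "wgt d T = sinh (1 / real d) ^ card T * cosh (1 / real d) ^ (d - card T)"

definition chi :: "(nat \<times> nat \<Rightarrow> real) \<Rightarrow> nat \<Rightarrow> nat set \<Rightarrow> real" where
  "chi s i T = (\<Prod>l\<in>T. s (i, l))"

lemma exp_pm: fixes v a :: real assumes "v = -1 \<or> v = 1"
  shows "exp (v * a) = sinh a * v + cosh a"
  using assms by (auto simp: cosh_def sinh_def field_simps)

lemma walsh:
  assumes s: "s \<in> sign_pats n d" and i: "i < n" and j: "j < n" and d: "0 < d"
  shows "Mmat d s i j = (\<Sum>T\<in>Pow {..<d}. wgt d T * (chi s i T * chi s j T))"
proof -
  have pm: "s (i, l) * s (j, l) = -1 \<or> s (i, l) * s (j, l) = 1" if "l < d" for l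
    using sp_val[OF s i that] sp_val[OF s j that] by auto
  have "Mmat d s i j = exp (\<Sum>l<d. s (i, l) * s (j, l) * (1 / real d))"
    unfolding Mmat_eq by (simp add: sum_divide_distrib)
  also have "\<dots> = (\<Prod>l<d. exp (s (i, l) * s (j, l) * (1 / real d)))"
    by (simp add: exp_sum)
  also have "\<dots> = (\<Prod>l<d. sinh (1 / real d) * (s (i, l) * s (j, l)) + cosh (1 / real d))"
  proof (rule prod.cong)
    fix l assume "l \<in> {..<d}"
    then have "exp (s (i, l) * s (j, l) * (1 / real d)) = sinh (1 / real d) * (s (i, l) * s (j, l)) + cosh (1 / real d)"
      using exp_pm[OF pm, of l "1 / real d"] by simp
    then show "exp (s (i, l) * s (j, l) * (1 / real d)) = sinh (1 / real d) * (s (i, l) * s (j, l)) + cosh (1 / real d)" .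
  qed simp
  also have "\<dots> = (\<Sum>X\<in>Pow {..<d}. (\<Prod>l\<in>X. sinh (1 / real d) * (s (i, l) * s (j, l))) * (\<Prod>l\<in>{..<d} - X. cosh (1 / real d)))"
    by (rule prod_add) simp
  also have "\<dots> = (\<Sum>T\<in>Pow {..<d}. wgt d T * (chi s i T * chi s j T))"
  proof (rule sum.cong)
    fix X assume X: "X \<in> Pow {..<d}"
    then have fX: "finite X" by (auto intro: finite_subset)
    have "card ({..<d} - X) = d - card X" using X fX by (simp add: card_Diff_subset)
    then show "(\<Prod>l\<in>X. sinh (1 / real d) * (s (i, l) * s (j, l))) * (\<Prod>l\<in>{..<d} - X. cosh (1 / real d))
      = wgt d X * (chi s i X * chi s j X)"
      unfolding wgt_def chi_def by (simp add: prod.distrib)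
  qed simp
  finally show ?thesis .
qed

lemma chi_abs: assumes s: "s \<in> sign_pats n d" and i: "i < n" and T: "T \<subseteq> {..<d}"
  shows "\<bar>chi s i T\<bar> = 1"
proof -
  have "\<bar>chi s i T\<bar> = (\<Prod>l\<in>T. \<bar>s (i, l)\<bar>)" unfolding chi_def by (simp add: abs_prod)
  also have "\<dots> = (\<Prod>l\<in>T. 1)" by (rule prod.cong) (use sp_abs[OF s i] T in auto)
  finally show ?thesis by simp
qed

lemma sinh_le: fixes a :: real assumes "0 \<le> a" shows "sinh a \<le> a * exp a"
proof -
  have "1 - 2 * a \<le> exp (- 2 * a)" using exp_ge_add_one_self[of "-2*a"] by simp
  then have "exp a * (1 - 2 * a) \<le> exp a * exp (-2 * a)" by (intro mult_left_mono) auto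
  also have "exp a * exp (-2 * a) = exp (-a)" by (simp flip: exp_add)
  finally show ?thesis unfolding sinh_def by (simp add: field_simps)
qed

lemma wgt_bounds: assumes d: "0 < d" and k: "card T \<le> d"
  shows "0 \<le> wgt d T" "wgt d T \<le> exp 1 / real d ^ card T"
proof -
  let ?a = "1 / real d"
  have a0: "0 \<le> ?a" by simp
  have sh0: "0 \<le> sinh ?a" using a0 by simp
  have ch0: "0 \<le> cosh ?a" by (simp add: cosh_def add_nonneg_nonneg)
  show "0 \<le> wgt d T" unfolding wgt_def using sh0 ch0 by simp
  have ch: "cosh ?a \<le> exp ?a" unfolding cosh_def using exp_le_cancel_iff[of "- ?a" ?a] a0 by simp
  have "wgt d T \<le> (?a * exp ?a) ^ card T * exp ?a ^ (d - card T)"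
    unfolding wgt_def using sinh_le[OF a0] ch sh0 ch0
    by (intro mult_mono power_mono) auto
  also have "\<dots> = ?a ^ card T * exp ?a ^ (card T + (d - card T))"
    by (simp only: power_mult_distrib power_add mult.assoc)
  also have "\<dots> = ?a ^ card T * exp 1"
    using k d by (simp flip: exp_of_nat_mult)
  finally show "wgt d T \<le> exp 1 / real d ^ card T" by (simp add: power_one_over)
qed



lemma fact_lb: "(real k / exp 1) ^ k \<le> fact k"
proof -
  have s: "(\<lambda>m. real k ^ m /\<^sub>R fact m) sums exp (real k)" by (rule exp_converges)
  have "(\<Sum>m\<in>{k}. real k ^ m /\<^sub>R fact m) \<le> (\<Sum>m. real k ^ m /\<^sub>R fact m)"
    by (rule sum_le_suminf) (use s in \<open>auto simp: sums_iff\<close>)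
  then have "real k ^ k / fact k \<le> exp (real k)" using s by (simp add: sums_iff divide_inverse mult.commute)
  then have "real k ^ k \<le> exp (real k) * fact k" by (simp add: divide_le_eq)
  moreover have "exp (real k) = exp 1 ^ k" by (simp flip: exp_of_nat_mult)
  ultimately show ?thesis by (simp add: power_divide divide_le_eq mult.commute)
qed

lemma ev_lnln: "eventually (\<lambda>n::nat. c \<le> ln (ln (real n))) sequentially"
proof -
  have "filterlim (\<lambda>n::nat. ln (ln (real n))) at_top sequentially" by real_asymp
  then show ?thesis by (simp add: filterlim_at_top)
qed

lemma asym1:
  fixes C :: real
  shows "eventually (\<lambda>n::nat. \<forall>dd::nat. ln (real n) \<le> real dd \<and> real dd \<le> C * ln (real n) \<longrightarrow>
     exp 1 * real dd * real n \<le> fact (nat \<lceil>4 * ln (real n) / ln (ln (real n))\<rceil> + 1)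
   \<and> real (nat \<lceil>4 * ln (real n) / ln (ln (real n))\<rceil> + 1) * (real dd ^ (nat \<lceil>4 * ln (real n) / ln (ln (real n))\<rceil>) / fact (nat \<lceil>4 * ln (real n) / ln (ln (real n))\<rceil>)) \<le> sqrt (real n)
   \<and> nat \<lceil>4 * ln (real n) / ln (ln (real n))\<rceil> \<le> dd) sequentially"
proof -
  have E0: "eventually (\<lambda>n::nat. exp 1 \<le> 4 * ln (real n) / ln (ln (real n))) sequentially" by real_asymp
  have E1: "eventually (\<lambda>n::nat. 4 * ln (real n) / ln (ln (real n)) + 1 \<le> ln (real n)) sequentially" by real_asymp
  have E2: "eventually (\<lambda>n::nat. exp 1 * (ln (real n))^2 * real n \<le> ((4 * ln (real n) / ln (ln (real n))) / exp 1) powr (4 * ln (real n) / ln (ln (real n)))) sequentially"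
    by real_asymp
  have E3: "eventually (\<lambda>n::nat. (4 * ln (real n) / ln (ln (real n)) + 2) * exp (2 * (4 * ln (real n) / ln (ln (real n)) + 1) * ln (ln (ln (real n)))) \<le> sqrt (real n)) sequentially"
    by real_asymp
  have E5: "eventually (\<lambda>n::nat. ln (ln (real n)) \<le> ln (real n)) sequentially" by real_asymp
  have E6: "eventually (\<lambda>n::nat. 3 \<le> n) sequentially" by (rule eventually_ge_at_top)
  show ?thesis
    using E0 E1 E2 E3 E5 E6 ev_lnln[of C] ev_lnln[of "C * exp 1 / 4"] ev_lnln[of 1]
  proof eventually_elim
    case (elim n)
    define L where "L = ln (real n)"
    define l where "l = ln L"
    define x where "x = 4 * L / l"
    define K where "K = nat \<lceil>x\<rceil>"
    have l1: "1 \<le> l" using elim unfolding l_def L_def by simp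
    have L1: "l \<le> L" using elim unfolding l_def L_def by simp
    have CL: "C \<le> L" using elim l1 L1 unfolding l_def L_def by linarith
    have Cl: "C * exp 1 / 4 \<le> l" using elim unfolding l_def L_def by simp
    have xe: "exp 1 \<le> x" using elim unfolding x_def l_def L_def by simp
    have x1L: "x + 1 \<le> L" using elim unfolding x_def l_def L_def by simp
    have E2': "exp 1 * L^2 * real n \<le> (x / exp 1) powr x" using elim unfolding x_def l_def L_def by simp
    have E3': "(x + 2) * exp (2 * (x + 1) * ln l) \<le> sqrt (real n)" using elim unfolding x_def l_def L_def by simp
    have x0: "0 < x" using xe by (meson exp_gt_zero less_le_trans)
    have Kx: "x \<le> real K" "real K < x + 1" unfolding K_def using x0 by linarith+
    have K0: "0 < K" using Kx x0 by linarith
    have xe1: "1 \<le> x / exp 1" using xe by simp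
    have factK: "(x / exp 1) powr x \<le> fact K"
    proof -
      have "(x / exp 1) powr x \<le> (x / exp 1) powr real K" by (rule powr_mono[OF Kx(1) xe1])
      also have "\<dots> = (x / exp 1) ^ K" using x0 by (subst powr_realpow) auto
      also have "\<dots> \<le> (real K / exp 1) ^ K" using Kx x0 by (intro power_mono divide_right_mono) auto
      also have "\<dots> \<le> fact K" by (rule fact_lb)
      finally show ?thesis .
    qed
    show ?case
    proof (intro allI impI conjI)
      fix dd :: nat assume dd: "ln (real n) \<le> real dd \<and> real dd \<le> C * ln (real n)"
      have ddCL: "real dd \<le> C * L" using dd L_def by simp
      have L0: "0 \<le> L" using l1 L1 by linarith
      have "exp 1 * real dd * real n \<le> exp 1 * (L * L) * real n"
        using ddCL CL L0 by (intro mult_right_mono mult_left_mono) (auto intro: order_trans mult_right_mono)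
      also have "\<dots> \<le> (x / exp 1) powr x" using E2' by (simp add: power2_eq_square)
      also have "\<dots> \<le> fact K" by (rule factK)
      also have "\<dots> \<le> fact (K + 1)" by (intro fact_mono) simp
      finally show "exp 1 * real dd * real n \<le> fact (nat \<lceil>4 * ln (real n) / ln (ln (real n))\<rceil> + 1)"
        unfolding K_def x_def l_def L_def .
      have fK0: "0 < (real K / exp 1) ^ K" using K0 by simp
      have "real dd ^ K / fact K \<le> real dd ^ K / (real K / exp 1) ^ K"
        by (intro divide_left_mono fact_lb) (use fK0 in auto)
      also have "\<dots> = (exp 1 * real dd / real K) ^ K" by (simp add: power_divide power_mult_distrib)
      also have "\<dots> \<le> (exp 1 * (C * L) / x) ^ K"
      proof (intro power_mono)
        show "exp 1 * real dd / real K \<le> exp 1 * (C * L) / x"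
          using ddCL Kx x0 by (intro frac_le mult_left_mono) auto
      qed simp
      also have "exp 1 * (C * L) / x = (C * exp 1 / 4) * l"
        using x0 l1 unfolding x_def by (simp add: field_simps)
      also have "((C * exp 1 / 4) * l) ^ K \<le> (l * l) ^ K"
      proof (intro power_mono)
        show "C * exp 1 / 4 * l \<le> l * l" using Cl l1 by (intro mult_right_mono) auto
        have LCL: "L \<le> C * L" using dd ddCL L_def by linarith
        have Lp: "0 < L" using l1 L1 by linarith
        have "1 \<le> C"
        proof (rule ccontr)
          assume "\<not> 1 \<le> C"
          then have "C * L < 1 * L" using Lp by (intro mult_strict_right_mono) auto
          then show False using LCL by simp
        qed
        then have "0 \<le> C" by simp
        then show "0 \<le> C * exp 1 / 4 * l" using l1 by simp
      qed
      also have "(l * l) ^ K = (l * l) powr real K" using l1 by (subst powr_realpow) auto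
      also have "\<dots> \<le> (l * l) powr (x + 1)"
        using Kx mult_mono[OF l1 l1] l1 by (intro powr_mono) auto
      also have "\<dots> = exp (2 * (x + 1) * ln l)"
        using l1 by (simp add: powr_def ln_mult)
      finally have b: "real dd ^ K / fact K \<le> exp (2 * (x + 1) * ln l)" .
      have "real (K + 1) * (real dd ^ K / fact K) \<le> (x + 2) * exp (2 * (x + 1) * ln l)"
        using Kx b by (intro mult_mono) auto
      also have "\<dots> \<le> sqrt (real n)" by (rule E3')
      finally show "real (nat \<lceil>4 * ln (real n) / ln (ln (real n))\<rceil> + 1) * (real dd ^ (nat \<lceil>4 * ln (real n) / ln (ln (real n))\<rceil>) / fact (nat \<lceil>4 * ln (real n) / ln (ln (real n))\<rceil>)) \<le> sqrt (real n)"
        unfolding K_def x_def l_def L_def .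
      have "real K \<le> real dd" using Kx x1L dd L_def by linarith
      then show "nat \<lceil>4 * ln (real n) / ln (ln (real n))\<rceil> \<le> dd"
        unfolding K_def x_def l_def L_def by simp
    qed
  qed
qed



lemma binom_div: "real (d choose k) / real d ^ k \<le> 1 / fact k"
proof (cases "d = 0")
  case True then show ?thesis by (cases k) auto
next
  case False
  have "real (d choose k) * fact k \<le> real d ^ k"
    using binomial_fact_pow[of d k] by (metis of_nat_fact of_nat_le_iff of_nat_mult of_nat_power)
  then show ?thesis using False by (simp add: field_simps)
qed

lemma tail_bound:
  assumes d: "0 < d"
  shows "(\<Sum>T\<in>{T \<in> Pow {..<d}. K < card T}. wgt d T) \<le> real d * exp 1 / fact (K + 1)"
proof -
  let ?G = "{T \<in> Pow {..<d}. K < card T}"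
  have finG: "finite ?G" by simp
  have cd: "card T \<le> d" if "T \<in> Pow {..<d}" for T
    using that card_mono[of "{..<d}" T] by auto
  have "(\<Sum>T\<in>?G. wgt d T) \<le> (\<Sum>T\<in>?G. exp 1 / real d ^ card T)"
    by (intro sum_mono wgt_bounds(2)[OF d]) (use cd in auto)
  also have "\<dots> = (\<Sum>k\<in>{K<..d}. \<Sum>T\<in>{T \<in> ?G. card T = k}. exp 1 / real d ^ card T)"
    by (rule sum.group[symmetric]) (use cd in auto)
  also have "\<dots> = (\<Sum>k\<in>{K<..d}. real (d choose k) * (exp 1 / real d ^ k))"
  proof (rule sum.cong)
    fix k assume k: "k \<in> {K<..d}"
    have "{T \<in> ?G. card T = k} = {B. B \<subseteq> {..<d} \<and> card B = k}" using k by auto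
    then have "card {T \<in> ?G. card T = k} = d choose k" by (simp add: n_subsets)
    moreover have "(\<Sum>T\<in>{T \<in> ?G. card T = k}. exp 1 / real d ^ card T) = (\<Sum>T\<in>{T \<in> ?G. card T = k}. exp 1 / real d ^ k)"
      by (rule sum.cong) auto
    ultimately show "(\<Sum>T\<in>{T \<in> ?G. card T = k}. exp 1 / real d ^ card T) = real (d choose k) * (exp 1 / real d ^ k)"
      by simp
  qed simp
  also have "\<dots> \<le> (\<Sum>k\<in>{K<..d}. exp 1 / fact (K + 1))"
  proof (intro sum_mono)
    fix k assume k: "k \<in> {K<..d}"
    have "real (d choose k) * (exp 1 / real d ^ k) = exp 1 * (real (d choose k) / real d ^ k)" by simp
    also have "\<dots> \<le> exp 1 * (1 / fact k)" by (intro mult_left_mono binom_div) auto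
    also have "\<dots> \<le> exp 1 * (1 / fact (K + 1))"
      using k by (intro mult_left_mono divide_left_mono fact_mono) auto
    finally show "real (d choose k) * (exp 1 / real d ^ k) \<le> exp 1 / fact (K + 1)" by simp
  qed
  also have "\<dots> = real (d - K) * (exp 1 / fact (K + 1))" by simp
  also have "\<dots> \<le> real d * (exp 1 / fact (K + 1))" by (intro mult_right_mono) auto
  finally show ?thesis by simp
qed

lemma pow_fact_mono: assumes "k \<le> K" "K \<le> d"
  shows "real d ^ k / fact k \<le> real d ^ K / fact K"
  using assms
proof (induction K rule: dec_induct)
  case base then show ?case by simp
next
  case (step K)
  have "real d ^ K / fact K \<le> real d ^ K / fact K * (real d / real (Suc K))"
    using step.prems by (intro mult_le_cancel_left1[THEN iffD2]) (auto simp: field_simps)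
  also have "\<dots> = real d ^ Suc K / fact (Suc K)" by (simp add: field_simps)
  finally show ?case using step by simp
qed

lemma card_F: "card {T \<in> Pow {..<d}. card T \<le> K} = (\<Sum>k\<le>K. d choose k)"
proof -
  let ?F = "{T \<in> Pow {..<d}. card T \<le> K}"
  have "card ?F = (\<Sum>T\<in>?F. 1)" by simp
  also have "\<dots> = (\<Sum>k\<in>{..K}. \<Sum>T\<in>{T \<in> ?F. card T = k}. 1)"
    by (rule sum.group[symmetric]) auto
  also have "\<dots> = (\<Sum>k\<le>K. d choose k)"
  proof (rule sum.cong)
    fix k assume k: "k \<in> {..K}"
    have "{T \<in> ?F. card T = k} = {B. B \<subseteq> {..<d} \<and> card B = k}" using k by auto
    then show "(\<Sum>T\<in>{T \<in> ?F. card T = k}. 1) = d choose k" by (simp add: n_subsets)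
  qed simp
  finally show ?thesis .
qed

lemma rank_bound: assumes "K \<le> d"
  shows "real (card {T \<in> Pow {..<d}. card T \<le> K}) \<le> real (K + 1) * (real d ^ K / fact K)"
proof -
  have "real (card {T \<in> Pow {..<d}. card T \<le> K}) = (\<Sum>k\<le>K. real (d choose k))"
    unfolding card_F by simp
  also have "\<dots> \<le> (\<Sum>k\<le>K. real d ^ K / fact K)"
  proof (intro sum_mono)
    fix k assume "k \<in> {..K}"
    then have "real (d choose k) \<le> real d ^ k / fact k"
      using binom_div[of d k] binomial_fact_pow[of d k]
      by (metis of_nat_fact of_nat_le_iff of_nat_mult of_nat_power pos_le_divide_eq fact_gt_zero)
    also have "\<dots> \<le> real d ^ K / fact K" using \<open>k \<in> {..K}\<close> assms by (intro pow_fact_mono) auto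
    finally show "real (d choose k) \<le> real d ^ K / fact K" .
  qed
  finally show ?thesis by simp
qed

lemma part1_det:
  assumes s: "s \<in> sign_pats n d" and d: "0 < d" and n: "0 < n"
    and fK: "exp 1 * real d * real n \<le> fact (K + 1)"
  shows "\<exists>U V. fro n (\<lambda>i j. Mmat d s i j - (0 + lowrank (card {T \<in> Pow {..<d}. card T \<le> K}) U V i j)) \<le> 1"
proof -
  define F where "F = {T \<in> Pow {..<d}. card T \<le> K}"
  define G where "G = {T \<in> Pow {..<d}. K < card T}"
  have finF: "finite F" unfolding F_def by simp
  obtain g where g: "bij_betw g {0..<card F} F" using ex_bij_betw_nat_finite[OF finF] by blast
  define U where "U = (\<lambda>i t. wgt d (g t) * chi s i (g t))"
  define V where "V = (\<lambda>j t. chi s j (g t))"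
  have lr: "lowrank (card F) U V i j = (\<Sum>T\<in>F. wgt d T * (chi s i T * chi s j T))" for i j
  proof -
    have "lowrank (card F) U V i j = (\<Sum>t\<in>{0..<card F}. wgt d (g t) * (chi s i (g t) * chi s j (g t)))"
      unfolding lowrank_def U_def V_def by (simp add: atLeast0LessThan mult.assoc)
    also have "\<dots> = (\<Sum>T\<in>F. wgt d T * (chi s i T * chi s j T))"
      by (rule sum.reindex_bij_betw[OF g])
    finally show ?thesis .
  qed
  have err: "\<bar>Mmat d s i j - (0 + lowrank (card F) U V i j)\<bar> \<le> 1 / real n" if i: "i < n" and j: "j < n" for i j
  proof -
    have PF: "Pow {..<d} = F \<union> G" and FG: "F \<inter> G = {}" unfolding F_def G_def by auto
    have "Mmat d s i j = (\<Sum>T\<in>F \<union> G. wgt d T * (chi s i T * chi s j T))"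
      using walsh[OF s i j d] PF by simp
    also have "\<dots> = (\<Sum>T\<in>F. wgt d T * (chi s i T * chi s j T)) + (\<Sum>T\<in>G. wgt d T * (chi s i T * chi s j T))"
      by (rule sum.union_disjoint) (use FG in \<open>auto simp: F_def G_def\<close>)
    finally have "Mmat d s i j - (0 + lowrank (card F) U V i j) = (\<Sum>T\<in>G. wgt d T * (chi s i T * chi s j T))"
      using lr by simp
    then have "\<bar>Mmat d s i j - (0 + lowrank (card F) U V i j)\<bar> \<le> (\<Sum>T\<in>G. \<bar>wgt d T * (chi s i T * chi s j T)\<bar>)"
      by (simp add: sum_abs)
    also have "\<dots> = (\<Sum>T\<in>G. wgt d T)"
    proof (rule sum.cong)
      fix T assume T: "T \<in> G"
      then have Td: "T \<subseteq> {..<d}" and cd: "card T \<le> d" unfolding G_def using card_mono[of "{..<d}" T] by auto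
      show "\<bar>wgt d T * (chi s i T * chi s j T)\<bar> = wgt d T"
        using chi_abs[OF s i Td] chi_abs[OF s j Td] wgt_bounds(1)[OF d cd] by (simp add: abs_mult)
    qed simp
    also have "\<dots> \<le> real d * exp 1 / fact (K + 1)" unfolding G_def by (rule tail_bound[OF d])
    also have "\<dots> \<le> 1 / real n"
    proof -
      obtain f :: real where f: "f = fact (K + 1)" by simp
      have f0: "0 < f" using f by simp
      have "exp 1 * real d * real n \<le> f" using fK f by simp
      then have "real d * exp 1 / f \<le> 1 / real n" using f0 n by (simp add: field_simps)
      then show ?thesis using f by simp
    qed
    finally show ?thesis .
  qed
  have "fro n (\<lambda>i j. Mmat d s i j - (0 + lowrank (card F) U V i j)) \<le> sqrt (\<Sum>i<n. \<Sum>j<n. (1 / real n)\<^sup>2)"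
    unfolding fro_def
  proof (intro real_sqrt_le_mono sum_mono)
    fix i j assume "i \<in> {..<n}" "j \<in> {..<n}"
    then show "(Mmat d s i j - (0 + lowrank (card F) U V i j))\<^sup>2 \<le> (1 / real n)\<^sup>2"
      using err[of i j] by (metis abs_ge_zero power2_abs power_mono lessThan_iff)
  qed
  also have "\<dots> = 1" using n by (simp add: power2_eq_square)
  finally show ?thesis unfolding F_def by blast
qed



lemma nnz_le: "nnz n A \<le> n * n"
proof -
  have "nnz n A \<le> card ({..<n} \<times> {..<n})"
    unfolding nnz_def by (rule card_mono) auto
  then show ?thesis by simp
qed

lemma fro_zero: "fro n (\<lambda>i j. 0) = 0" unfolding fro_def by simp

lemma lowrank0: "lowrank 0 U V i j = 0" unfolding lowrank_def by simp

lemma powr32: "real n powr (3/2) = real n * sqrt (real n)"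
proof -
  have "real n powr (3/2) = real n powr (1 + 1/2)" by simp
  also have "\<dots> = real n powr 1 * real n powr (1/2)" by (rule powr_add)
  also have "\<dots> = real n * sqrt (real n)" by (cases "n = 0") (auto simp: powr_half_sqrt)
  finally show ?thesis .
qed

lemma ln_ge1: "3 \<le> n \<Longrightarrow> 1 \<le> ln (real n)"
proof -
  assume "3 \<le> n"
  then have "exp 1 \<le> real n" using exp_le by linarith
  then show ?thesis using ln_ge_iff[of "real n" 1] \<open>3 \<le> n\<close> by simp
qed

theorem mainTheorem1:
  fixes \<epsilon> :: real and d :: "nat \<Rightarrow> nat"
  assumes eps: "0 < \<epsilon>" "\<epsilon> \<le> 1/2"
    and d_lb: "eventually (\<lambda>n. 6 / \<epsilon>\<^sup>2 * ln (real n) \<le> real (d n)) sequentially"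
    and d_Theta: "(\<lambda>n. real (d n)) \<in> \<Theta>(\<lambda>n. ln (real n) / \<epsilon>\<^sup>2)"
  shows
    "(\<exists>C>0. eventually (\<lambda>n. \<forall>\<gamma>::real. 0 < \<gamma> \<and> \<gamma> \<le> 1 \<longrightarrow>
        prQ n (d n) (\<lambda>s. \<exists>S U V r.
            real (nnz n S + n * r + n * r) \<le> C / \<gamma> * real n powr (3/2) * ln (real n)
          \<and> fro n (\<lambda>i j. Mmat (d n) s i j - (S i j + lowrank r U V i j)) \<le> \<gamma> * sqrt (real n))
        \<ge> 1 - 1 / real n) sequentially)
   \<and> (\<forall>R :: nat \<Rightarrow> nat \<Rightarrow> nat \<Rightarrow> real.
        (\<lambda>n. real n - real (mrank n (R n))) \<in> \<Omega>(\<lambda>n. real n) \<longrightarrow>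
        (\<exists>c>0. eventually (\<lambda>n.
           prQ n (d n) (\<lambda>s. fro n (\<lambda>i j. Mmat (d n) s i j - R n i j) \<ge> c * sqrt (real n))
             \<ge> 1 - 1 / real n) sequentially))
   \<and> (\<forall>(k :: nat \<Rightarrow> nat) (E :: nat \<Rightarrow> nat \<Rightarrow> nat \<Rightarrow> real).
        filterlim (\<lambda>n. real n - real (k n)) at_top sequentially \<longrightarrow>
        eventually (\<lambda>n. \<forall>i<n. row_nnz n (E n) i < k n) sequentially \<longrightarrow>
        (\<exists>c>0. eventually (\<lambda>n.
           prQ n (d n) (\<lambda>s. fro n (\<lambda>i j. Mmat (d n) s i j - E n i j) \<ge> c * sqrt (real n))
             \<ge> 1 - 1 / real n) sequentially))"
proof -
  have e2: "\<epsilon>\<^sup>2 \<le> 1/4" using eps power_mono[of \<epsilon> "1/2" 2] by (simp add: power_divide)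
  have e20: "0 < \<epsilon>\<^sup>2" using eps by simp
  have six: "1 \<le> 6 / \<epsilon>\<^sup>2" using e2 e20 by (simp add: field_simps)
  obtain c where c: "c > 0" and evc: "eventually (\<lambda>n. norm (real (d n)) \<le> c * norm (ln (real n) / \<epsilon>\<^sup>2)) sequentially"
    using bigthetaD1[OF d_Theta] by (elim landau_o.bigE)
  define C where "C = c / \<epsilon>\<^sup>2"
  have evn3: "eventually (\<lambda>n::nat. 3 \<le> n) sequentially" by (rule eventually_ge_at_top)
  have evdU: "eventually (\<lambda>n. real (d n) \<le> C * ln (real n)) sequentially"
    using evc evn3
  proof eventually_elim
    case (elim n)
    then have "0 \<le> ln (real n)" by simp
    then show ?case using elim e20 unfolding C_def by (simp add: abs_of_nonneg)
  qed
  have evdL: "eventually (\<lambda>n. ln (real n) \<le> real (d n)) sequentially"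
    using d_lb evn3
  proof eventually_elim
    case (elim n)
    then have "0 \<le> ln (real n)" by simp
    then have "1 * ln (real n) \<le> 6 / \<epsilon>\<^sup>2 * ln (real n)" by (rule mult_right_mono[OF six])
    then show ?case using elim by linarith
  qed
  have dpos: "0 < d n" if "ln (real n) \<le> real (d n)" "3 \<le> n" for n
    using that ln_ge1[OF that(2)] by simp
  have P1: "\<exists>C>0. eventually (\<lambda>n. \<forall>\<gamma>::real. 0 < \<gamma> \<and> \<gamma> \<le> 1 \<longrightarrow>
        prQ n (d n) (\<lambda>s. \<exists>S U V r.
            real (nnz n S + n * r + n * r) \<le> C / \<gamma> * real n powr (3/2) * ln (real n)
          \<and> fro n (\<lambda>i j. Mmat (d n) s i j - (S i j + lowrank r U V i j)) \<le> \<gamma> * sqrt (real n))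
        \<ge> 1 - 1 / real n) sequentially"
  proof (intro exI[of _ 2] conjI)
    show "eventually (\<lambda>n. \<forall>\<gamma>::real. 0 < \<gamma> \<and> \<gamma> \<le> 1 \<longrightarrow>
        prQ n (d n) (\<lambda>s. \<exists>S U V r.
            real (nnz n S + n * r + n * r) \<le> 2 / \<gamma> * real n powr (3/2) * ln (real n)
          \<and> fro n (\<lambda>i j. Mmat (d n) s i j - (S i j + lowrank r U V i j)) \<le> \<gamma> * sqrt (real n))
        \<ge> 1 - 1 / real n) sequentially"
      using asym1[of C] evdU evdL evn3
    proof eventually_elim
      case (elim n)
      define K where "K = nat \<lceil>4 * ln (real n) / ln (ln (real n))\<rceil>"
      have dn: "0 < d n" using dpos elim by blast
      have Ln: "1 \<le> ln (real n)" using ln_ge1 elim by blast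
      have n0: "0 < n" using elim by simp
      have A: "exp 1 * real (d n) * real n \<le> fact (K + 1)"
        and B: "real (K + 1) * (real (d n) ^ K / fact K) \<le> sqrt (real n)"
        and Kd: "K \<le> d n"
        using elim unfolding K_def by blast+
      show ?case
      proof (intro allI impI)
        fix \<gamma> :: real assume g: "0 < \<gamma> \<and> \<gamma> \<le> 1"
        have "prQ n (d n) (\<lambda>s. \<exists>S U V r.
            real (nnz n S + n * r + n * r) \<le> 2 / \<gamma> * real n powr (3/2) * ln (real n)
          \<and> fro n (\<lambda>i j. Mmat (d n) s i j - (S i j + lowrank r U V i j)) \<le> \<gamma> * sqrt (real n)) = 1"
        proof (rule prQ_one)
          fix s assume s: "s \<in> sign_pats n (d n)"
          have sq0: "0 \<le> sqrt (real n)" by simp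
          show "\<exists>S U V r.
            real (nnz n S + n * r + n * r) \<le> 2 / \<gamma> * real n powr (3/2) * ln (real n)
          \<and> fro n (\<lambda>i j. Mmat (d n) s i j - (S i j + lowrank r U V i j)) \<le> \<gamma> * sqrt (real n)"
          proof (cases "\<gamma> * sqrt (real n) < 1")
            case True
            have "real (nnz n (Mmat (d n) s)) \<le> real n * real n"
              using nnz_le[of n "Mmat (d n) s"] by (metis of_nat_le_iff of_nat_mult)
            also have "\<dots> = real n * (sqrt (real n) * sqrt (real n))" by simp
            also have "\<dots> \<le> real n * (sqrt (real n) * (1 / \<gamma>))"
              using True g sq0 by (intro mult_left_mono) (auto simp: field_simps)
            also have "\<dots> \<le> real n * (sqrt (real n) * (1 / \<gamma>)) * (2 * ln (real n))"
            proof -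
              have "0 \<le> real n * (sqrt (real n) * (1 / \<gamma>))" using g by simp
              moreover have "1 \<le> 2 * ln (real n)" using Ln by simp
              ultimately show ?thesis using mult_left_mono[of 1 "2 * ln (real n)" "real n * (sqrt (real n) * (1 / \<gamma>))"] by simp
            qed
            also have "\<dots> = 2 / \<gamma> * real n powr (3/2) * ln (real n)"
              unfolding powr32 by (simp add: field_simps)
            finally have "real (nnz n (Mmat (d n) s) + n * 0 + n * 0) \<le> 2 / \<gamma> * real n powr (3/2) * ln (real n)"
              by simp
            moreover have "fro n (\<lambda>i j. Mmat (d n) s i j - (Mmat (d n) s i j + lowrank 0 (\<lambda>_ _. 0) (\<lambda>_ _. 0) i j)) \<le> \<gamma> * sqrt (real n)"
              using g by (simp add: lowrank0 fro_zero)
            ultimately show ?thesis by blast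
          next
            case False
            obtain U V where UV: "fro n (\<lambda>i j. Mmat (d n) s i j - (0 + lowrank (card {T \<in> Pow {..<d n}. card T \<le> K}) U V i j)) \<le> 1"
              using part1_det[OF s dn n0 A] by blast
            define r where "r = card {T \<in> Pow {..<d n}. card T \<le> K}"
            have r: "real r \<le> sqrt (real n)"
              unfolding r_def using rank_bound[OF Kd] B by linarith
            have "real (nnz n (\<lambda>i j. 0) + n * r + n * r) = 2 * (real n * real r)"
              by (simp add: nnz_def)
            also have "\<dots> \<le> 2 * (real n * sqrt (real n))"
              using r by (intro mult_left_mono) auto
            also have "\<dots> \<le> 2 * (real n * sqrt (real n)) * ((1 / \<gamma>) * ln (real n))"
            proof -
              have "0 \<le> 2 * (real n * sqrt (real n))" by simp
              moreover have "1 \<le> (1 / \<gamma>) * ln (real n)"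
                using mult_mono[of 1 "1 / \<gamma>" 1 "ln (real n)"] Ln g by simp
              ultimately show ?thesis using mult_left_mono[of 1 "(1 / \<gamma>) * ln (real n)" "2 * (real n * sqrt (real n))"] by simp
            qed
            also have "\<dots> = 2 / \<gamma> * real n powr (3/2) * ln (real n)"
              unfolding powr32 by (simp add: field_simps)
            finally have "real (nnz n (\<lambda>i j. 0) + n * r + n * r) \<le> 2 / \<gamma> * real n powr (3/2) * ln (real n)" .
            moreover have "fro n (\<lambda>i j. Mmat (d n) s i j - (0 + lowrank r U V i j)) \<le> \<gamma> * sqrt (real n)"
              using UV False unfolding r_def by linarith
            ultimately show ?thesis by blast
          qed
        qed
        then show "prQ n (d n) (\<lambda>s. \<exists>S U V r.
            real (nnz n S + n * r + n * r) \<le> 2 / \<gamma> * real n powr (3/2) * ln (real n)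
          \<and> fro n (\<lambda>i j. Mmat (d n) s i j - (S i j + lowrank r U V i j)) \<le> \<gamma> * sqrt (real n))
          \<ge> 1 - 1 / real n" by simp
      qed
    qed
  qed simp
  have P2: "\<forall>R :: nat \<Rightarrow> nat \<Rightarrow> nat \<Rightarrow> real.
        (\<lambda>n. real n - real (mrank n (R n))) \<in> \<Omega>(\<lambda>n. real n) \<longrightarrow>
        (\<exists>c>0. eventually (\<lambda>n.
           prQ n (d n) (\<lambda>s. fro n (\<lambda>i j. Mmat (d n) s i j - R n i j) \<ge> c * sqrt (real n))
             \<ge> 1 - 1 / real n) sequentially)"
  proof (intro allI impI)
    fix R :: "nat \<Rightarrow> nat \<Rightarrow> nat \<Rightarrow> real"
    have E4: "eventually (\<lambda>n::nat. 2 * (2 * (ln (ln (real n)))^2 * (ln (real n))^2) * real n powr (2 * (ln (ln (real n)))^2 * (ln (real n))^2) * real n \<le> 2 powr real n) sequentially"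
      by real_asymp
    show "\<exists>c>0. eventually (\<lambda>n.
           prQ n (d n) (\<lambda>s. fro n (\<lambda>i j. Mmat (d n) s i j - R n i j) \<ge> c * sqrt (real n))
             \<ge> 1 - 1 / real n) sequentially"
    proof (intro exI[of _ "1 / exp 1"] conjI)
      show "eventually (\<lambda>n.
           prQ n (d n) (\<lambda>s. fro n (\<lambda>i j. Mmat (d n) s i j - R n i j) \<ge> 1 / exp 1 * sqrt (real n))
             \<ge> 1 - 1 / real n) sequentially"
        using E4 evdU evdL evn3 ev_lnln[of C] ev_lnln[of 0]
      proof eventually_elim
        case (elim n)
        define L where "L = ln (real n)"
        define l where "l = ln L"
        define P where "P = sign_pats n (d n)"
        define Bad where "Bad = {s \<in> P. fro n (\<lambda>i j. Mmat (d n) s i j - R n i j) < sqrt (real n) / exp 1}"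
        define m where "m = 2 * d n ^ 2"
        have dn: "0 < d n" using dpos elim by blast
        have n0: "0 < n" using elim by simp
        have L1: "1 \<le> L" unfolding L_def using ln_ge1 elim by blast
        have l0: "0 \<le> l" "C \<le> l" using elim unfolding l_def L_def by auto
        have E4': "2 * (2 * l^2 * L^2) * real n powr (2 * l^2 * L^2) * real n \<le> 2 powr real n"
          using elim unfolding l_def L_def by simp
        have bc: "2^n * card Bad \<le> card P * (2 * (m * n^m))"
          unfolding Bad_def P_def m_def by (rule bad_count[OF dn n0])
        have ddl: "real (d n) \<le> l * L"
        proof -
          have "real (d n) \<le> C * L" using elim L_def by simp
          also have "\<dots> \<le> l * L" using l0 L1 by (intro mult_right_mono) auto
          finally show ?thesis .
        qed
        have mle: "real m \<le> 2 * l^2 * L^2"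
        proof -
          have "real m = 2 * real (d n) ^ 2" unfolding m_def by simp
          also have "\<dots> \<le> 2 * (l * L) ^ 2" using ddl by (intro mult_left_mono power_mono) auto
          finally show ?thesis by (simp add: power_mult_distrib)
        qed
        have nm: "real n ^ m \<le> real n powr (2 * l^2 * L^2)"
        proof -
          have "real n ^ m = real n powr real m" using n0 by (simp add: powr_realpow)
          also have "\<dots> \<le> real n powr (2 * l^2 * L^2)" using mle n0 by (intro powr_mono) auto
          finally show ?thesis .
        qed
        have key: "real (2 * (m * n^m)) * real n \<le> 2 ^ n"
        proof -
          have "real (2 * (m * n^m)) = 2 * real m * real n ^ m" by simp
          also have "\<dots> \<le> 2 * (2 * l^2 * L^2) * real n powr (2 * l^2 * L^2)"
            using mle nm by (intro mult_mono) auto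
          finally have "real (2 * (m * n^m)) * real n \<le> 2 * (2 * l^2 * L^2) * real n powr (2 * l^2 * L^2) * real n"
            by (intro mult_right_mono) auto
          also have "\<dots> \<le> 2 powr real n" by (rule E4')
          also have "\<dots> = 2 ^ n" by (simp add: powr_realpow)
          finally show ?thesis .
        qed
        have bc': "2 ^ n * real (card Bad) \<le> real (card P) * real (2 * (m * n^m))"
          using bc by (metis of_nat_le_iff of_nat_mult of_nat_numeral of_nat_power)
        have "2 ^ n * (real (card Bad) * real n) \<le> real (card P) * (real (2 * (m * n^m)) * real n)"
          using bc' by (simp add: mult.assoc[symmetric] mult_right_mono)
        also have "\<dots> \<le> real (card P) * 2 ^ n" using key by (intro mult_left_mono) auto
        finally have cb: "real (card Bad) * real n \<le> real (card P)" by (simp add: mult.commute)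
        have finP: "finite P" unfolding P_def by (rule sp_finite)
        have cP: "0 < card P" unfolding P_def using sp_ne sp_finite by (simp add: card_gt_0_iff)
        have BadP: "Bad \<subseteq> P" unfolding Bad_def by auto
        have set: "{s \<in> sign_pats n (d n). 1 / exp 1 * sqrt (real n) \<le> fro n (\<lambda>i j. Mmat (d n) s i j - R n i j)} = P - Bad"
          unfolding Bad_def P_def by auto
        have cD: "real (card (P - Bad)) = real (card P) - real (card Bad)"
          using BadP finP by (simp add: card_Diff_subset finite_subset of_nat_diff card_mono)
        have "1 - 1 / real n \<le> (real (card P) - real (card Bad)) / real (card P)"
          using cb cP n0 by (simp add: field_simps)
        then show ?case unfolding prQ_card set cD[symmetric] by (simp add: P_def)
      qed
    qed simp
  qed
  have P3: "\<forall>(k :: nat \<Rightarrow> nat) (E :: nat \<Rightarrow> nat \<Rightarrow> nat \<Rightarrow> real).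
        filterlim (\<lambda>n. real n - real (k n)) at_top sequentially \<longrightarrow>
        eventually (\<lambda>n. \<forall>i<n. row_nnz n (E n) i < k n) sequentially \<longrightarrow>
        (\<exists>c>0. eventually (\<lambda>n.
           prQ n (d n) (\<lambda>s. fro n (\<lambda>i j. Mmat (d n) s i j - E n i j) \<ge> c * sqrt (real n))
             \<ge> 1 - 1 / real n) sequentially)"
  proof (intro allI impI)
    fix k :: "nat \<Rightarrow> nat" and E :: "nat \<Rightarrow> nat \<Rightarrow> nat \<Rightarrow> real"
    assume lim: "filterlim (\<lambda>n. real n - real (k n)) at_top sequentially"
      and rows: "eventually (\<lambda>n. \<forall>i<n. row_nnz n (E n) i < k n) sequentially"
    have evk: "eventually (\<lambda>n. 1 \<le> real n - real (k n)) sequentially"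
      using lim by (simp add: filterlim_at_top)
    show "\<exists>c>0. eventually (\<lambda>n.
           prQ n (d n) (\<lambda>s. fro n (\<lambda>i j. Mmat (d n) s i j - E n i j) \<ge> c * sqrt (real n))
             \<ge> 1 - 1 / real n) sequentially"
    proof (intro exI[of _ "1 / exp 1"] conjI)
      show "eventually (\<lambda>n.
           prQ n (d n) (\<lambda>s. fro n (\<lambda>i j. Mmat (d n) s i j - E n i j) \<ge> 1 / exp 1 * sqrt (real n))
             \<ge> 1 - 1 / real n) sequentially"
        using evk rows
      proof eventually_elim
        case (elim n)
        have r: "\<forall>i<n. row_nnz n (E n) i < n" using elim by fastforce
        have "prQ n (d n) (\<lambda>s. fro n (\<lambda>i j. Mmat (d n) s i j - E n i j) \<ge> 1 / exp 1 * sqrt (real n)) = 1"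
          by (rule prQ_one) (use part3_det[OF _ r] in simp)
        then show ?case by simp
      qed
    qed simp
  qed
  show ?thesis using P1 P2 P3 by blast
qed

end
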